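(* Let $G=([n],E)$ be an undirected graph with pathwidth $s=\mathrm{pw}(G)\ge 1$. Then there exist a function $c:[n]\to[s]$ and a permutation $u\in\Pi([n])$ such that for every $i\in[n]$ at least one of the following holds: (1) for every neighbour $k$ of $i$ in $G$, $u(i)\le u(k)$; (2) for all $j,k\in[n]$ such that $c(j)=c(i)$, $u(i)<u(j)$ and $k$ is a neighbour of $j$ in $G$, we have $u(i)\le u(k)$.
   Context: $[n]=\{1,\dots,n\}$. $\Pi([n])$ is the set of permutations of $[n]$ written as words $(u_1,\dots,u_n)$ in which each element occurs once; $u(i)$ denotes the position of $i$ in $u$. A path decomposition of an undirected graph $G=(V,E)$ is a sequence $X_1,\dots,X_p$ of subsets of $V$ such that every vertex lies in some $X_a$, every edge has both endpoints in some common $X_a$, and if $v\in X_a\cap X_b$ with $a<b$ then $v\in X_c$ for all $c\in[a,b]$. Its size is $\max_a|X_a|-1$, and the pathwidth $\mathrm{pw}(G)$ is the minimum size of a path decomposition of $G$. *)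

theory Defs
  imports Main
begin

text \<open>Undirected graph on vertex set V given by a symmetric edge relation E (as a set of ordered pairs).
  A path decomposition is a list X of bags X!0,...,X!(p-1).\<close>

definition is_path_decomposition :: "'a set \<Rightarrow> ('a \<times> 'a) set \<Rightarrow> 'a set list \<Rightarrow> bool" where
  "is_path_decomposition V E X \<longleftrightarrow>
     (\<forall>a < length X. X ! a \<subseteq> V) \<and>
     (\<forall>v\<in>V. \<exists>a < length X. v \<in> X ! a) \<and>
     (\<forall>(v, w)\<in>E. \<exists>a < length X. v \<in> X ! a \<and> w \<in> X ! a) \<and>
     (\<forall>v a b c. a \<le> c \<and> c \<le> b \<and> b < length X \<and> v \<in> X ! a \<and> v \<in> X ! b \<longrightarrow> v \<in> X ! c)"

definition pd_size :: "'a set list \<Rightarrow> nat" where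
  "pd_size X = Max (insert 0 (card ` set X)) - 1"

definition pathwidth :: "'a set \<Rightarrow> ('a \<times> 'a) set \<Rightarrow> nat" where
  "pathwidth V E = (LEAST s. \<exists>X. is_path_decomposition V E X \<and> pd_size X = s)"

end

theory Submission imports Defs begin

lemma interval_coloring:
  fixes J :: "'a set" and a b :: "'a \<Rightarrow> nat"
  assumes "finite J" "\<forall>j\<in>J. a j < b j" "\<forall>i\<in>J. card {j\<in>J. a j \<le> a i \<and> a i < b j} \<le> s"
  shows "\<exists>c. c ` J \<subseteq> {1..s} \<and> (\<forall>i\<in>J. \<forall>j\<in>J. i \<noteq> j \<and> a i < b j \<and> a j < b i \<longrightarrow> c i \<noteq> c j)"
  using assms
proof (induction J rule: finite_ranking_induct[where f = a])
  case empty
  then show ?case by auto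
next
  case (insert x S)
  show ?case
  proof (cases "x \<in> S")
    case True
    then show ?thesis using insert by (simp add: insert_absorb)
  next
    case False
    have h2: "\<forall>j\<in>S. a j < b j" using insert.prems by auto
    have h3: "\<forall>i\<in>S. card {j\<in>S. a j \<le> a i \<and> a i < b j} \<le> s"
    proof
      fix i assume "i \<in> S"
      then have "card {j\<in>insert x S. a j \<le> a i \<and> a i < b j} \<le> s" using insert.prems by auto
      moreover have "card {j\<in>S. a j \<le> a i \<and> a i < b j} \<le> card {j\<in>insert x S. a j \<le> a i \<and> a i < b j}"
        by (rule card_mono) (use insert.hyps in auto)
      ultimately show "card {j\<in>S. a j \<le> a i \<and> a i < b j} \<le> s" by linarith
    qed
    obtain c where c1: "c ` S \<subseteq> {1..s}" and c2: "\<forall>i\<in>S. \<forall>j\<in>S. i \<noteq> j \<and> a i < b j \<and> a j < b i \<longrightarrow> c i \<noteq> c j"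
      using insert.IH h2 h3 by blast
    define N where "N = {j\<in>S. a j \<le> a x \<and> a x < b j}"
    have fN: "finite N" using insert.hyps N_def by auto
    have "{j\<in>insert x S. a j \<le> a x \<and> a x < b j} = insert x N"
      using insert.prems N_def by auto
    moreover have "card (insert x N) = Suc (card N)" using fN False N_def by auto
    ultimately have "Suc (card N) \<le> s" using insert.prems by auto
    moreover have "card (c ` N) \<le> card N" using fN card_image_le by blast
    ultimately have "card (c ` N) < card {1..s}" by simp
    then have "\<not> {1..s} \<subseteq> c ` N"
      using fN by (meson card_mono finite_imageI leD)
    then obtain col where col: "col \<in> {1..s}" "col \<notin> c ` N" by blast
    define c' where "c' = c(x := col)"
    have "c' ` insert x S \<subseteq> {1..s}" using c1 col False unfolding c'_def by auto
    moreover have "\<forall>i\<in>insert x S. \<forall>j\<in>insert x S. i \<noteq> j \<and> a i < b j \<and> a j < b i \<longrightarrow> c' i \<noteq> c' j"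
    proof (intro ballI impI)
      fix i j assume ij: "i \<in> insert x S" "j \<in> insert x S" "i \<noteq> j \<and> a i < b j \<and> a j < b i"
      show "c' i \<noteq> c' j"
      proof (cases "i = x")
        case True
        then have "j \<in> N" using ij insert.hyps(2)[of j] N_def by auto
        then show ?thesis using True ij col False unfolding c'_def by auto
      next
        case F1: False
        show ?thesis
        proof (cases "j = x")
          case True
          then have "i \<in> N" using ij F1 insert.hyps(2)[of i] N_def by auto
          then show ?thesis using True ij col False F1 unfolding c'_def by auto
        next
          case False
          then show ?thesis using F1 ij c2 unfolding c'_def by auto
        qed
      qed
    qed
    ultimately show ?thesis by blast
  qed
qed

theorem mainTheorem13:
  fixes n :: nat and E :: "(nat \<times> nat) set"
  assumes edges: "E \<subseteq> {1..n} \<times> {1..n}"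
    and undirected: "sym E"
    and pw: "pathwidth {1..n} E \<ge> 1"
  shows "\<exists>(c :: nat \<Rightarrow> nat) (u :: nat \<Rightarrow> nat).
           c ` {1..n} \<subseteq> {1..pathwidth {1..n} E} \<and>
           bij_betw u {1..n} {1..n} \<and>
           (\<forall>i\<in>{1..n}.
              (\<forall>k. (i, k) \<in> E \<longrightarrow> u i \<le> u k) \<or>
              (\<forall>j\<in>{1..n}. \<forall>k\<in>{1..n}.
                 c j = c i \<and> u i < u j \<and> (j, k) \<in> E \<longrightarrow> u i \<le> u k))"
proof -
  define V where "V = {1..n::nat}"
  define s where "s = pathwidth V E"
  have s1: "s \<ge> 1" using pw V_def s_def by simp
  have ex: "\<exists>X. is_path_decomposition V E X \<and> pd_size X = pd_size [V]"
    apply (rule exI[of _ "[V]"])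
    using edges unfolding is_path_decomposition_def V_def by auto
  have ex2: "\<exists>t X. is_path_decomposition V E X \<and> pd_size X = t" using ex by blast
  have "\<exists>X. is_path_decomposition V E X \<and> pd_size X = (LEAST t. \<exists>X. is_path_decomposition V E X \<and> pd_size X = t)"
    using ex2 by (rule LeastI_ex)
  then obtain X where X: "is_path_decomposition V E X" and Xs: "pd_size X = s"
    unfolding s_def pathwidth_def by blast
  have Xsub: "\<And>a. a < length X \<Longrightarrow> X ! a \<subseteq> V"
    and Xcov: "\<And>v. v \<in> V \<Longrightarrow> \<exists>a < length X. v \<in> X ! a"
    and Xedge: "\<And>v w. (v, w) \<in> E \<Longrightarrow> \<exists>a < length X. v \<in> X ! a \<and> w \<in> X ! a"
    and Xconv: "\<And>v a b c. a \<le> c \<Longrightarrow> c \<le> b \<Longrightarrow> b < length X \<Longrightarrow> v \<in> X ! a \<Longrightarrow> v \<in> X ! b \<Longrightarrow> v \<in> X ! c"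
    using X unfolding is_path_decomposition_def by blast+
  have fV: "finite V" by (simp add: V_def)
  have bag: "\<And>a. a < length X \<Longrightarrow> card (X ! a) \<le> s + 1"
  proof -
    fix a assume a: "a < length X"
    have "card (X ! a) \<le> Max (insert 0 (card ` set X))"
      using a by (intro Max_ge) auto
    then show "card (X ! a) \<le> s + 1" using Xs s1 unfolding pd_size_def by linarith
  qed
  define r where "r v = (GREATEST a. a < length X \<and> v \<in> X ! a)" for v
  have r1: "r v < length X \<and> v \<in> X ! r v" if vV: "v \<in> V" for v
  proof -
    obtain a where "a < length X \<and> v \<in> X ! a" using Xcov[OF vV] by blast
    then show ?thesis unfolding r_def
      by (rule GreatestI_nat[where b = "length X"]) simp
  qed
  have r2: "a \<le> r v" if "a < length X" "v \<in> X ! a" for a v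
    unfolding r_def by (rule Greatest_le_nat[where b = "length X"]) (use that in auto)
  define lt where "lt w v \<longleftrightarrow> r w < r v \<or> (r w = r v \<and> w < v)" for w v
  define u where "u v = Suc (card {w\<in>V. lt w v})" for v
  have uV: "u v \<in> V" if "v \<in> V" for v
  proof -
    have "{w\<in>V. lt w v} \<subseteq> V - {v}" unfolding lt_def by auto
    then have "card {w\<in>V. lt w v} \<le> card (V - {v})" using fV by (intro card_mono) auto
    also have "\<dots> = n - 1" using that by (simp add: V_def)
    finally show ?thesis using that unfolding u_def V_def by auto
  qed
  have ult: "u w < u v" if "w \<in> V" "v \<in> V" "lt w v" for w v
  proof -
    have "{x\<in>V. lt x w} \<subset> {x\<in>V. lt x v}"
      using that unfolding lt_def by auto
    then have "card {x\<in>V. lt x w} < card {x\<in>V. lt x v}" using fV by (intro psubset_card_mono) auto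
    then show ?thesis unfolding u_def by simp
  qed
  have uinj: "inj_on u V"
  proof (rule inj_onI)
    fix v w assume "v \<in> V" "w \<in> V" "u v = u w"
    then show "v = w" using ult[of v w] ult[of w v] unfolding lt_def
      by (metis less_irrefl linorder_neqE_nat)
  qed
  have ur: "r w \<le> r v" if "w \<in> V" "v \<in> V" "u w < u v" for w v
    using ult[of v w] that unfolding lt_def by fastforce
  have ubij: "bij_betw u V V"
    unfolding bij_betw_def using uinj endo_inj_surj[OF fV _ uinj] uV by blast
  have EV: "\<And>j k. (j, k) \<in> E \<Longrightarrow> j \<in> V \<and> k \<in> V" using edges V_def by auto
  have sep: "card {w\<in>V. u p < u w \<and> (\<exists>k. (w, k) \<in> E \<and> u k \<le> u p)} \<le> s" if pV: "p \<in> V" for p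
  proof -
    define S where "S = {w\<in>V. u p < u w \<and> (\<exists>k. (w, k) \<in> E \<and> u k \<le> u p)}"
    have "insert p S \<subseteq> X ! r p"
    proof
      fix w assume "w \<in> insert p S"
      then show "w \<in> X ! r p"
      proof
        assume "w = p" then show ?thesis using r1 pV by auto
      next
        assume wS: "w \<in> S"
        then obtain k where k: "(w, k) \<in> E" "u k \<le> u p" and wV: "w \<in> V" and upw: "u p < u w"
          unfolding S_def by auto
        have kV: "k \<in> V" using EV k by auto
        have rk: "r k \<le> r p"
        proof (cases "u k = u p")
          case True then have "k = p" using uinj kV pV inj_on_def by metis
          then show ?thesis by simp
        next
          case False then show ?thesis using ur[OF kV pV] k by simp
        qed
        have rw: "r p \<le> r w" using ur[OF pV wV upw] .
        obtain a where a: "a < length X" "w \<in> X ! a" "k \<in> X ! a" using Xedge k by blast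
        have "a \<le> r k" using r2 a by blast
        then show ?thesis using Xconv[of a "r p" "r w" w] a rk rw r1[OF wV] by linarith
      qed
    qed
    moreover have "p \<notin> S" unfolding S_def by auto
    moreover have "finite S" unfolding S_def using fV by auto
    ultimately have "Suc (card S) \<le> card (X ! r p)"
      using Xsub r1 pV fV by (metis card.insert card_mono finite_subset)
    then show ?thesis using bag r1 pV unfolding S_def by fastforce
  qed
  define B where "B = {j\<in>V. \<exists>k. (j, k) \<in> E \<and> u k < u j}"
  define a where "a j = Min (u ` {k. (j, k) \<in> E})" for j
  have aprops: "a j < u j \<and> (\<forall>k. (j, k) \<in> E \<longrightarrow> a j \<le> u k) \<and> (\<exists>k. (j, k) \<in> E \<and> u k = a j)"
    if jB0: "j \<in> B" for j
  proof -
    have fin: "finite (u ` {k. (j, k) \<in> E})"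
    proof -
      have "{k. (j, k) \<in> E} \<subseteq> V" using EV by blast
      then have "finite {k. (j, k) \<in> E}" using fV finite_subset by blast
      then show ?thesis by simp
    qed
    obtain k where k: "(j, k) \<in> E" "u k < u j" using jB0 B_def by auto
    have ne: "u ` {k. (j, k) \<in> E} \<noteq> {}" using k by auto
    have "a j \<le> u k" unfolding a_def using fin k by auto
    moreover have "\<forall>k. (j, k) \<in> E \<longrightarrow> a j \<le> u k" unfolding a_def using fin by auto
    moreover have "a j \<in> u ` {k. (j, k) \<in> E}" unfolding a_def using Min_in[OF fin ne] .
    ultimately show ?thesis using k by auto
  qed
  have fB: "finite B" using fV B_def by auto
  have cnt: "\<forall>i\<in>B. card {j\<in>B. a j \<le> a i \<and> a i < u j} \<le> s"
  proof
    fix i assume iB: "i \<in> B"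
    obtain p where p: "(i, p) \<in> E" "u p = a i" using aprops[OF iB] by auto
    have pV: "p \<in> V" using EV p by auto
    have "{j\<in>B. a j \<le> a i \<and> a i < u j} \<subseteq> {w\<in>V. u p < u w \<and> (\<exists>k. (w, k) \<in> E \<and> u k \<le> u p)}"
    proof
      fix j assume j: "j \<in> {j\<in>B. a j \<le> a i \<and> a i < u j}"
      then have jB: "j \<in> B" by auto
      obtain k where "(j, k) \<in> E" "u k = a j" using aprops[OF jB] by auto
      then show "j \<in> {w\<in>V. u p < u w \<and> (\<exists>k. (w, k) \<in> E \<and> u k \<le> u p)}"
        using j p B_def by auto
    qed
    then have "card {j\<in>B. a j \<le> a i \<and> a i < u j} \<le> card {w\<in>V. u p < u w \<and> (\<exists>k. (w, k) \<in> E \<and> u k \<le> u p)}"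
      using fV by (intro card_mono) auto
    then show "card {j\<in>B. a j \<le> a i \<and> a i < u j} \<le> s" using sep[OF pV] by linarith
  qed
  obtain c0 where c0: "c0 ` B \<subseteq> {1..s}"
    and c0d: "\<forall>i\<in>B. \<forall>j\<in>B. i \<noteq> j \<and> a i < u j \<and> a j < u i \<longrightarrow> c0 i \<noteq> c0 j"
  proof -
    have "\<forall>j\<in>B. a j < u j" using aprops by blast
    from interval_coloring[OF fB this cnt] show ?thesis using that by blast
  qed
  define c where "c j = (if j \<in> B then c0 j else 1)" for j
  have "c ` V \<subseteq> {1..s}" using c0 s1 unfolding c_def by auto
  moreover have "\<forall>i\<in>V.
              (\<forall>k. (i, k) \<in> E \<longrightarrow> u i \<le> u k) \<or>
              (\<forall>j\<in>V. \<forall>k\<in>V.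
                 c j = c i \<and> u i < u j \<and> (j, k) \<in> E \<longrightarrow> u i \<le> u k)"
  proof
    fix i assume iV: "i \<in> V"
    show "(\<forall>k. (i, k) \<in> E \<longrightarrow> u i \<le> u k) \<or>
              (\<forall>j\<in>V. \<forall>k\<in>V. c j = c i \<and> u i < u j \<and> (j, k) \<in> E \<longrightarrow> u i \<le> u k)"
    proof (cases "i \<in> B")
      case False
      then show ?thesis using iV unfolding B_def by (auto simp: not_less)
    next
      case iB: True
      have "\<forall>j\<in>V. \<forall>k\<in>V. c j = c i \<and> u i < u j \<and> (j, k) \<in> E \<longrightarrow> u i \<le> u k"
      proof (intro ballI impI)
        fix j k assume jV: "j \<in> V" and kV: "k \<in> V" and h: "c j = c i \<and> u i < u j \<and> (j, k) \<in> E"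
        show "u i \<le> u k"
        proof (cases "j \<in> B")
          case False
          then show ?thesis using h jV unfolding B_def by auto
        next
          case jB: True
          show ?thesis
          proof (rule ccontr)
            assume "\<not> u i \<le> u k"
            then have "a j < u i" using aprops[OF jB] h by fastforce
            moreover have "a i < u j" using aprops[OF iB] h by linarith
            moreover have "i \<noteq> j" using h by auto
            moreover have "c0 i = c0 j" using h iB jB unfolding c_def by auto
            ultimately show False using c0d iB jB by blast
          qed
        qed
      qed
      then show ?thesis by blast
    qed
  qed
  ultimately show ?thesis using ubij unfolding V_def s_def by blast
qed

end
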